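(* Let $n\ge2$, $m\ge2$, and let $M$ be a nonderogatory $m\times m$ matrix with minimal polynomial $\mathbf p(X)=X^m$. Let $k_+,k_-$ be integers with $1\le k_+,k_-\le m-1$ and $k_++k_-=m$. Then the algebra $\mathfrak B(X^{k_+},X^{k_-},\mathbf 1)$ is not a pseudocirculant algebra, i.e. there are no $A,B\in\mathcal P(M)$ with $\ker A\cap\ker B=\{0\}$ such that $\mathfrak B(X^{k_+},X^{k_-},\mathbf 1)=\mathcal F^{\mathcal P(M)}_{A,B}$.
   Context: $\mathcal P(M)$ is the algebra of polynomials in $M$. $\mathfrak B(\mathbf p_+,\mathbf p_-,\boldsymbol\chi)$ (for $\mathbf p_+\mathbf p_-\mid\mathbf p$, $\boldsymbol\chi$ coprime to $\mathbf p$, $\mathbf q=\mathbf p/(\mathbf p_+\mathbf p_-)$) is the set of $n\times n$ block Toeplitz matrices $A=(A_{i-j})_{i,j=0}^{n-1}$ with all $A_i\in\mathcal P(M)$ such that for each $i=1,\dots,n-1$ there are polynomials $\mathbf a_i,\mathbf a_{i-n}$ with $A_i=\mathbf p_+(M)\mathbf a_i(M)$, $A_{i-n}=\mathbf p_-(M)\mathbf a_{i-n}(M)$ and $\mathbf q\mid\mathbf a_i-\boldsymbol\chi\mathbf a_{i-n}$; here $\mathbf 1$ is the constant polynomial $1$. For $A,B\in\mathcal P(M)$, $\mathcal F^{\mathcal P(M)}_{A,B}$ is the set of $n\times n$ block Toeplitz matrices $(T_{p-q})_{p,q=0}^{n-1}$ with all $T_j\in\mathcal P(M)$ and $AT_j=BT_{j-n}$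 for $j=1,\dots,n-1$; it is called a pseudocirculant algebra when $\ker A\cap\ker B=\{0\}$. *)

theory Defs
  imports "HOL-Analysis.Analysis" "HOL-Computational_Algebra.Polynomial"
begin

text \<open>Square complex matrices of size m = CARD('m) are modelled as complex^'m^'m.\<close>

primrec matpow :: "complex^'m^'m \<Rightarrow> nat \<Rightarrow> complex^'m^'m" where
  "matpow M 0 = mat 1"
| "matpow M (Suc k) = M ** matpow M k"

definition poly_mat :: "complex poly \<Rightarrow> complex^'m^'m \<Rightarrow> complex^'m^'m" where
  "poly_mat p M = (\<Sum>i\<le>degree p. mat (coeff p i) ** matpow M i)"

definition polys_in :: "complex^'m^'m \<Rightarrow> (complex^'m^'m) set" where
  "polys_in M = {poly_mat a M | a. True}"

definition mat_ker :: "complex^'m^'m \<Rightarrow> (complex^'m) set" where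
  "mat_ker A = {x. A *v x = 0}"

definition charpoly :: "complex^'m^'m \<Rightarrow> complex poly" where
  "charpoly M = det (\<chi> i j. (if i = j then [:0, 1:] else 0) - [:M $ i $ j:])"

definition is_minimal_poly :: "complex^'m^'m \<Rightarrow> complex poly \<Rightarrow> bool" where
  "is_minimal_poly M p \<longleftrightarrow> lead_coeff p = 1 \<and> poly_mat p M = 0 \<and>
     (\<forall>q. q \<noteq> 0 \<and> poly_mat q M = 0 \<longrightarrow> degree p \<le> degree q)"

definition nonderogatory :: "complex^'m^'m \<Rightarrow> bool" where
  "nonderogatory M \<longleftrightarrow> is_minimal_poly M (charpoly M)"

text \<open>The n x n block Toeplitz matrix (T_{i-j}) with blocks T_k, k = -(n-1)..n-1,
  represented as a function of the block indices (0 outside the range 0..n-1).\<close>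
definition block_toeplitz :: "nat \<Rightarrow> (int \<Rightarrow> complex^'m^'m) \<Rightarrow> nat \<Rightarrow> nat \<Rightarrow> complex^'m^'m" where
  "block_toeplitz n T = (\<lambda>i j. if i < n \<and> j < n then T (int i - int j) else 0)"

definition frakB :: "nat \<Rightarrow> complex^'m^'m \<Rightarrow> complex poly \<Rightarrow> complex poly \<Rightarrow> complex poly
    \<Rightarrow> complex poly \<Rightarrow> (nat \<Rightarrow> nat \<Rightarrow> complex^'m^'m) set" where
  "frakB n M p pp pm chi =
    {block_toeplitz n T | T.
       (\<forall>k\<in>{-(int n - 1)..int n - 1}. T k \<in> polys_in M) \<and>
       (\<forall>i\<in>{1..int n - 1}. \<exists>ai ain.
          T i = poly_mat pp M ** poly_mat ai M \<and>
          T (i - int n) = poly_mat pm M ** poly_mat ain M \<and>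
          (p div (pp * pm)) dvd (ai - chi * ain))}"

definition frakF :: "nat \<Rightarrow> complex^'m^'m \<Rightarrow> complex^'m^'m \<Rightarrow> complex^'m^'m
    \<Rightarrow> (nat \<Rightarrow> nat \<Rightarrow> complex^'m^'m) set" where
  "frakF n M A B =
    {block_toeplitz n T | T.
       (\<forall>k\<in>{-(int n - 1)..int n - 1}. T k \<in> polys_in M) \<and>
       (\<forall>j\<in>{1..int n - 1}. A ** T j = B ** T (j - int n))}"

end

theory Submission
  imports Defs
begin

lemma matpow_add: "matpow M (a + b) = matpow M a ** matpow M b"
  by (induction a) (simp_all add: matrix_mul_assoc)

lemma poly_mat_zero: "poly_mat 0 M = 0"
  by (simp add: poly_mat_def mat_0)

lemma poly_mat_one: "poly_mat 1 M = mat 1"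
  by (simp add: poly_mat_def)

lemma xpow_monom: "([:0, 1:] :: complex poly) ^ k = monom 1 k"
  by (simp add: monom_altdef)

lemma poly_mat_xpow: "poly_mat ([:0, 1:] ^ k) M = matpow M k"
proof -
  have "poly_mat ([:0, 1:] ^ k) M = (\<Sum>i\<le>k. if i = k then matpow M k else 0)"
    unfolding poly_mat_def xpow_monom degree_monom_eq[OF one_neq_zero]
    by (intro sum.cong) (auto simp: coeff_monom mat_0)
  also have "\<dots> = matpow M k" by simp
  finally show ?thesis .
qed

lemma xpow_in: "matpow M k \<in> polys_in M"
proof -
  have "matpow M k = poly_mat ([:0,1:]^k) M" by (simp only: poly_mat_xpow)
  then show ?thesis unfolding polys_in_def by blast
qed

lemma zero_in: "0 \<in> polys_in M"
proof -
  have "0 = poly_mat 0 M" by (simp only: poly_mat_zero)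
  then show ?thesis unfolding polys_in_def by blast
qed

lemma bt_eq:
  assumes "block_toeplitz n T = block_toeplitz n T'" "k \<in> {-(int n - 1)..int n - 1}"
  shows "T k = T' k"
proof (cases "k \<ge> 0")
  case True
  then have a: "nat k < n" "int (nat k) - int 0 = k" using assms(2) by auto
  have "block_toeplitz n T (nat k) 0 = block_toeplitz n T' (nat k) 0" using assms(1) by simp
  then have "T (int (nat k) - int 0) = T' (int (nat k) - int 0)"
    unfolding block_toeplitz_def using a(1) by (simp only: if_True) (auto split: if_splits)
  then show ?thesis using a(2) by simp
next
  case False
  then have a: "nat (-k) < n" "int 0 - int (nat (-k)) = k" using assms(2) by auto
  have "block_toeplitz n T 0 (nat (-k)) = block_toeplitz n T' 0 (nat (-k))" using assms(1) by simp
  then have "T (int 0 - int (nat (-k))) = T' (int 0 - int (nat (-k)))"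
    unfolding block_toeplitz_def using a(1) by (auto split: if_splits)
  then show ?thesis using a(2) by simp
qed

lemma frakB_intro:
  assumes "\<And>k. T k \<in> polys_in M"
    "\<And>i. i \<in> {1..int n - 1} \<Longrightarrow> \<exists>ai ain. T i = poly_mat pp M ** poly_mat ai M \<and>
          T (i - int n) = poly_mat pm M ** poly_mat ain M \<and> (p div (pp * pm)) dvd (ai - chi * ain)"
  shows "block_toeplitz n T \<in> frakB n M p pp pm chi"
  unfolding frakB_def using assms by blast

theorem mainTheorem15:
  fixes M :: "complex^'m^'m" and n kp km :: nat
  assumes "n \<ge> 2" and "CARD('m) \<ge> 2"
    and "nonderogatory M"
    and "is_minimal_poly M ([:0, 1:] ^ CARD('m))"
    and "1 \<le> kp" and "kp \<le> CARD('m) - 1"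
    and "1 \<le> km" and "km \<le> CARD('m) - 1"
    and "kp + km = CARD('m)"
  shows "\<not> (\<exists>A B. A \<in> polys_in M \<and> B \<in> polys_in M \<and> mat_ker A \<inter> mat_ker B = {0} \<and>
            frakB n M ([:0, 1:] ^ CARD('m)) ([:0, 1:] ^ kp) ([:0, 1:] ^ km) 1 = frakF n M A B)"
proof
  assume "\<exists>A B. A \<in> polys_in M \<and> B \<in> polys_in M \<and> mat_ker A \<inter> mat_ker B = {0} \<and>
            frakB n M ([:0, 1:] ^ CARD('m)) ([:0, 1:] ^ kp) ([:0, 1:] ^ km) 1 = frakF n M A B"
  then obtain A B where AB: "mat_ker A \<inter> mat_ker B = {0}"
    and eq: "frakB n M ([:0, 1:] ^ CARD('m)) ([:0, 1:] ^ kp) ([:0, 1:] ^ km) 1 = frakF n M A B"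
    by blast
  let ?m = "CARD('m)"
  have q1: "([:0, 1:] ^ ?m) div ([:0, 1:] ^ kp * [:0, 1:] ^ km) = (1::complex poly)"
    using assms(9) by (simp add: power_add[symmetric])
  have r1: "1 \<in> {-(int n - 1)..int n - 1}" "1 - int n \<in> {-(int n - 1)..int n - 1}"
    using assms(1) by auto
  define T1 where "T1 = (\<lambda>k::int. if k = 1 then matpow M kp else 0)"
  have "block_toeplitz n T1 \<in> frakB n M ([:0, 1:] ^ ?m) ([:0, 1:] ^ kp) ([:0, 1:] ^ km) 1"
  proof (rule frakB_intro, unfold q1)
    fix k :: int show "T1 k \<in> polys_in M" by (simp add: T1_def xpow_in zero_in)
  next
    fix i :: int assume i: "i \<in> {1..int n - 1}"
    show "\<exists>ai ain. T1 i = poly_mat ([:0, 1:] ^ kp) M ** poly_mat ai M \<and>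
          T1 (i - int n) = poly_mat ([:0, 1:] ^ km) M ** poly_mat ain M \<and> 1 dvd ai - 1 * ain"
      apply (rule exI[of _ "if i = 1 then 1 else 0"], rule exI[of _ 0])
      using i by (auto simp: T1_def poly_mat_xpow poly_mat_one poly_mat_zero)
  qed
  then obtain T' where T': "block_toeplitz n T1 = block_toeplitz n T'"
    "\<forall>j\<in>{1..int n - 1}. A ** T' j = B ** T' (j - int n)"
    unfolding eq frakF_def by blast
  have "A ** matpow M kp = 0"
    using T'(2) r1 bt_eq[OF T'(1) r1(1)] bt_eq[OF T'(1) r1(2)] assms(1)
    by (auto simp: T1_def)
  define T2 where "T2 = (\<lambda>k::int. if k = 1 - int n then matpow M km else 0)"
  have "block_toeplitz n T2 \<in> frakB n M ([:0, 1:] ^ ?m) ([:0, 1:] ^ kp) ([:0, 1:] ^ km) 1"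
  proof (rule frakB_intro, unfold q1)
    fix k :: int show "T2 k \<in> polys_in M" by (simp add: T2_def xpow_in zero_in)
  next
    fix i :: int assume i: "i \<in> {1..int n - 1}"
    show "\<exists>ai ain. T2 i = poly_mat ([:0, 1:] ^ kp) M ** poly_mat ai M \<and>
          T2 (i - int n) = poly_mat ([:0, 1:] ^ km) M ** poly_mat ain M \<and> 1 dvd ai - 1 * ain"
      apply (rule exI[of _ 0], rule exI[of _ "if i = 1 then 1 else 0"])
      using i by (auto simp: T2_def poly_mat_xpow poly_mat_one poly_mat_zero)
  qed
  then obtain T'' where T'': "block_toeplitz n T2 = block_toeplitz n T''"
    "\<forall>j\<in>{1..int n - 1}. A ** T'' j = B ** T'' (j - int n)"
    unfolding eq frakF_def by blast
  have "A ** T'' 1 = B ** T'' (1 - int n)" using T''(2) assms(1) by auto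
  moreover have "T'' 1 = 0" "T'' (1 - int n) = matpow M km"
    using bt_eq[OF T''(1) r1(1)] bt_eq[OF T''(1) r1(2)] assms(1) by (auto simp: T2_def)
  ultimately have "B ** matpow M km = 0" by simp
  have "matpow M (?m - 1) \<noteq> 0"
  proof
    assume z: "matpow M (?m - 1) = 0"
    have "degree ([:0, 1:] ^ ?m :: complex poly) \<le> degree ([:0, 1:] ^ (?m - 1) :: complex poly)"
      using assms(4) z unfolding is_minimal_poly_def by (simp add: poly_mat_xpow)
    then have "?m \<le> ?m - 1" unfolding xpow_monom degree_monom_eq[OF one_neq_zero] .
    then show False using assms(2) by linarith
  qed
  then obtain w where w: "matpow M (?m - 1) *v w \<noteq> 0"
    using matrix_eq[of "matpow M (?m - 1)" 0] by auto
  define v where "v = matpow M (?m - 1) *v w"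
  have "A *v v = 0"
  proof -
    have "?m - 1 = kp + (km - 1)" using assms by simp
    then have "v = matpow M kp *v (matpow M (km - 1) *v w)"
      unfolding v_def by (simp add: matpow_add matrix_vector_mul_assoc)
    then have "A *v v = A *v (matpow M kp *v (matpow M (km - 1) *v w))" by (rule arg_cong)
    also have "\<dots> = (A ** matpow M kp) *v (matpow M (km - 1) *v w)" by (rule matrix_vector_mul_assoc)
    finally show ?thesis using \<open>A ** matpow M kp = 0\<close> by simp
  qed
  moreover have "B *v v = 0"
  proof -
    have "?m - 1 = km + (kp - 1)" using assms by simp
    then have "v = matpow M km *v (matpow M (kp - 1) *v w)"
      unfolding v_def by (simp add: matpow_add matrix_vector_mul_assoc)
    then have "B *v v = B *v (matpow M km *v (matpow M (kp - 1) *v w))" by (rule arg_cong)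
    also have "\<dots> = (B ** matpow M km) *v (matpow M (kp - 1) *v w)" by (rule matrix_vector_mul_assoc)
    finally show ?thesis using \<open>B ** matpow M km = 0\<close> by simp
  qed
  ultimately have "v \<in> mat_ker A \<inter> mat_ker B" by (simp add: mat_ker_def)
  then have "v \<in> {0}" unfolding AB .
  then have "v = 0" by simp
  then show False using w by (simp only: v_def)
qed

end
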